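(* There exists an absolute constant $C$ such that for all $t\in\mathbb N$ and all real $\vartheta$ with $\lvert\vartheta\rvert\le\pi$ we have $\|X_t(\vartheta)\|_\infty\le C\lvert\vartheta\rvert^3$.
   Context: Let $\mathsf r(n)$ be the number of (overlapping) occurrences of $\mathtt{11}$ in the binary expansion of $n\in\mathbb N=\{0,1,\dots\}$, and $d(t,n)=\mathsf r(n+t)-\mathsf r(n)$. Let $a_t(k)$, $b_t(k)$ be the asymptotic densities (which exist and form probability distributions on $\mathbb Z$) of $\{n:d(t,2n)=k\}$, $\{n:d(t,2n+1)=k\}$; let $m_t^\alpha,m_t^\beta$ be their means and $v_t^\alpha,v_t^\beta$ their variances. Write $\mathrm e(\vartheta)=\exp(i\vartheta)$. Define $\alpha^*_t(\vartheta)=\exp(m_t^\alpha i\vartheta-\frac12v_t^\alpha\vartheta^2)$, $\beta^*_t(\vartheta)=\exp(m_t^\beta i\vartheta-\frac12 v_t^\beta\vartheta^2)$ and $S^*_t(\vartheta)=(\alpha^*_{2t},\beta^*_{2t},\alpha^*_{2t+1},\beta^*_{2t+1},\alpha^*_{2t+2},\beta^*_{2t+2})^T(\vartheta)$. With $x=\mathrm e(\vartheta)$, define the $6\times6$ matrices \[ D_0(\vartheta)=\frac12\begin{pmatrix}1&1&0&0&0&0\\1&1&0&0&0&0\\1&x&0&0&0&0\\0&0&1&x^{-1}&0&0\\0&0&1&1&0&0\\0&0&x&x^{-1}&0&0\end{pmatrix},\quad D_1(\vartheta)=\frac12\begin{pmatrix}0&0&1&1&0&0\\0&0&x&x^{-1}&0&0\\0&0&x&1&0&0\\0&0&0&0&1&x^{-1}\\0&0&0&0&1&1\\0&0&0&0&1&1\end{pmatrix},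 \] and for $t\in\mathbb N$ let $X_{2t}(\vartheta)=S^*_{2t}(\vartheta)-D_0(\vartheta)S^*_t(\vartheta)$ and $X_{2t+1}(\vartheta)=S^*_{2t+1}(\vartheta)-D_1(\vartheta)S^*_t(\vartheta)$. Here $\|\cdot\|_\infty$ is the maximum norm on $\mathbb C^6$. *)

theory Defs
  imports "HOL-Analysis.Analysis"
begin

definition r11 :: "nat \<Rightarrow> nat" where
  "r11 n = card {i::nat. bit n i \<and> bit n (Suc i)}"

definition dd :: "nat \<Rightarrow> nat \<Rightarrow> int" where
  "dd t n = int (r11 (n + t)) - int (r11 n)"

definition asym_density :: "nat set \<Rightarrow> real" where
  "asym_density A = lim (\<lambda>N. real (card {n\<in>A. n < N}) / real N)"

definition a_dens :: "nat \<Rightarrow> int \<Rightarrow> real" where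
  "a_dens t k = asym_density {n. dd t (2*n) = k}"

definition b_dens :: "nat \<Rightarrow> int \<Rightarrow> real" where
  "b_dens t k = asym_density {n. dd t (2*n+1) = k}"

definition dist_mean :: "(int \<Rightarrow> real) \<Rightarrow> real" where
  "dist_mean p = infsum (\<lambda>k. real_of_int k * p k) UNIV"

definition dist_var :: "(int \<Rightarrow> real) \<Rightarrow> real" where
  "dist_var p = infsum (\<lambda>k. (real_of_int k - dist_mean p)^2 * p k) UNIV"

definition ee :: "real \<Rightarrow> complex" where
  "ee \<theta> = exp (\<i> * complex_of_real \<theta>)"

definition gauss_approx :: "(int \<Rightarrow> real) \<Rightarrow> real \<Rightarrow> complex" where
  "gauss_approx p \<theta> = exp (complex_of_real (dist_mean p) * \<i> * complex_of_real \<theta>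
       - complex_of_real (dist_var p * \<theta>^2 / 2))"

definition alpha_star :: "nat \<Rightarrow> real \<Rightarrow> complex" where
  "alpha_star t = gauss_approx (a_dens t)"

definition beta_star :: "nat \<Rightarrow> real \<Rightarrow> complex" where
  "beta_star t = gauss_approx (b_dens t)"

definition S_star :: "nat \<Rightarrow> real \<Rightarrow> complex list" where
  "S_star t \<theta> = [alpha_star (2*t) \<theta>, beta_star (2*t) \<theta>,
                   alpha_star (2*t+1) \<theta>, beta_star (2*t+1) \<theta>,
                   alpha_star (2*t+2) \<theta>, beta_star (2*t+2) \<theta>]"

definition D0 :: "real \<Rightarrow> complex list list" where
  "D0 \<theta> = (let x = ee \<theta> in map (map (\<lambda>c. c / 2))
     [[1,1,0,0,0,0],
      [1,1,0,0,0,0],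
      [1,x,0,0,0,0],
      [0,0,1,inverse x,0,0],
      [0,0,1,1,0,0],
      [0,0,x,inverse x,0,0]])"

definition D1 :: "real \<Rightarrow> complex list list" where
  "D1 \<theta> = (let x = ee \<theta> in map (map (\<lambda>c. c / 2))
     [[0,0,1,1,0,0],
      [0,0,x,inverse x,0,0],
      [0,0,x,1,0,0],
      [0,0,0,0,1,inverse x],
      [0,0,0,0,1,1],
      [0,0,0,0,1,1]])"

definition mat_vec :: "complex list list \<Rightarrow> complex list \<Rightarrow> complex list" where
  "mat_vec M v = map (\<lambda>row. \<Sum>j<6. row ! j * v ! j) M"

definition vec_sub :: "complex list \<Rightarrow> complex list \<Rightarrow> complex list" where
  "vec_sub u v = map2 (-) u v"

definition X_vec :: "nat \<Rightarrow> real \<Rightarrow> complex list" where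
  "X_vec n \<theta> = (if even n
      then vec_sub (S_star n \<theta>) (mat_vec (D0 \<theta>) (S_star (n div 2) \<theta>))
      else vec_sub (S_star n \<theta>) (mat_vec (D1 \<theta>) (S_star (n div 2) \<theta>)))"

definition max_norm :: "complex list \<Rightarrow> real" where
  "max_norm v = Max (set (map cmod v))"

end

theory Submission
  imports Defs
begin


definition S11 :: "nat \<Rightarrow> nat set" where "S11 n = {i::nat. bit n i \<and> bit n (Suc i)}"

lemma S11_sub: "S11 n \<subseteq> {..<n}"
proof
  fix i assume "i \<in> S11 n"
  then have "bit n i" by (simp add: S11_def)
  then have "n div 2^i \<noteq> 0" by (metis bit_iff_odd even_zero)
  then have "2^i \<le> n" by (metis div_less not_le)
  moreover have "i < 2^i" by simp
  ultimately show "i \<in> {..<n}" by (meson lessThan_iff less_le_trans)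
qed

lemma S11_fin: "finite (S11 n)" using S11_sub finite_subset by blast

lemma S11_rec: "S11 m = (if odd m \<and> odd (m div 2) then {0} else {}) \<union> Suc ` S11 (m div 2)"
proof -
  have "i \<in> S11 m \<longleftrightarrow> i \<in> (if odd m \<and> odd (m div 2) then {0} else {}) \<union> Suc ` S11 (m div 2)" for i
    by (cases i) (auto simp: S11_def bit_Suc bit_0)
  then show ?thesis by blast
qed

lemma r11_rec: "r11 m = r11 (m div 2) + (if odd m \<and> odd (m div 2) then 1 else 0)"
proof -
  have "r11 m = card (S11 m)" by (simp add: r11_def S11_def)
  also have "\<dots> = card ((if odd m \<and> odd (m div 2) then {0} else {}) \<union> Suc ` S11 (m div 2))"
    using S11_rec by metis
  also have "\<dots> = (if odd m \<and> odd (m div 2) then 1 else 0) + card (Suc ` S11 (m div 2))"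
    by (subst card_Un_disjoint) (auto simp: S11_fin)
  also have "card (Suc ` S11 (m div 2)) = r11 (m div 2)"
    by (simp add: card_image r11_def S11_def)
  finally show ?thesis by simp
qed

definition q :: "nat \<Rightarrow> int" where "q n = (if odd n then 1 else 0)"

lemma r11_even: "r11 (2*n) = r11 n" by (subst r11_rec) simp
lemma r11_odd: "int (r11 (2*n+1)) = int (r11 n) + q n" by (subst r11_rec) (simp add: q_def)

lemma dd_ee: "dd (2*t) (2*n) = dd t n"
proof -
  have e: "2*n+2*t = 2*(n+t)" by simp
  show ?thesis unfolding dd_def e r11_even by simp
qed
lemma dd_eo: "dd (2*t) (2*n+1) = dd t n + q (n+t) - q n"
proof -
  have e: "2*n+1+2*t = 2*(n+t)+1" by simp
  show ?thesis unfolding dd_def e r11_odd by simp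
qed
lemma dd_oe: "dd (2*t+1) (2*n) = dd t n + q (n+t)"
proof -
  have e: "2*n+(2*t+1) = 2*(n+t)+1" by simp
  show ?thesis unfolding dd_def e r11_odd r11_even by simp
qed
lemma dd_oo: "dd (2*t+1) (2*n+1) = dd (t+1) n - q n"
proof -
  have e: "2*n+1+(2*t+1) = 2*(n+(t+1))" by simp
  show ?thesis unfolding dd_def e r11_odd r11_even by simp
qed



definition hasdens :: "nat set \<Rightarrow> real \<Rightarrow> bool" where
  "hasdens A d \<longleftrightarrow> (\<lambda>N. real (card {n\<in>A. n<N}) / real N) \<longlonglongrightarrow> d"

lemma hasdens_asym: "hasdens A d \<Longrightarrow> asym_density A = d"
  unfolding hasdens_def asym_density_def by (rule limI)

lemma card_lt_Suc: "card {n\<in>B. n < Suc M} = card {n\<in>B. n<M} + (if M\<in>B then 1 else 0)"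
proof (cases "M \<in> B")
  case True
  then have "{n\<in>B. n < Suc M} = insert M {n\<in>B. n<M}" by auto
  then show ?thesis using True by simp
next
  case False
  then have "{n\<in>B. n < Suc M} = {n\<in>B. n<M}" using less_Suc_eq by auto
  then show ?thesis using False by simp
qed

lemma card_split:
  fixes A :: "nat set"
  shows "card {n\<in>A. n<N} = card {m\<in>{n. 2*n\<in>A}. m < (N+1) div 2} + card {m\<in>{n. 2*n+1\<in>A}. m < N div 2}"
proof (induction N)
  case 0
  then show ?case by simp
next
  case (Suc N)
  show ?case
  proof (cases "even N")
    case True
    then obtain m where m: "N = 2*m" by blast
    have e1: "(Suc N + 1) div 2 = Suc m" "(N+1) div 2 = m" "Suc N div 2 = m" "N div 2 = m" using m by simp_all
    show ?thesis using Suc.IH unfolding card_lt_Suc e1 by (simp add: m)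
  next
    case False
    then obtain m where m: "N = 2*m+1" using oddE by blast
    have e1: "(Suc N + 1) div 2 = Suc m" "(N+1) div 2 = Suc m" "Suc N div 2 = Suc m" "N div 2 = m" using m by simp_all
    show ?thesis using Suc.IH unfolding card_lt_Suc e1 by (simp add: m)
  qed
qed

lemma inv2: "(\<lambda>N. 1/(2*real N)) \<longlonglongrightarrow> 0"
proof -
  have "(\<lambda>N. 1/2 * inverse (real N)) \<longlonglongrightarrow> 1/2 * 0" by (intro tendsto_mult tendsto_const lim_inverse_n)
  moreover have "(\<lambda>N. 1/(2*real N)) = (\<lambda>N. 1/2 * inverse (real N))" by (simp add: fun_eq_iff field_simps)
  ultimately show ?thesis by simp
qed

lemma half_up_lim: "(\<lambda>N::nat. real ((N+1) div 2) / real N) \<longlonglongrightarrow> 1/2"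
proof (rule tendsto_sandwich[of "\<lambda>N. 1/2" _ _ "\<lambda>N. 1/2 + 1/(2 * real N)"])
  show "\<forall>\<^sub>F N in sequentially. 1/2 \<le> real ((N+1) div 2) / real N"
    using eventually_gt_at_top[of 0]
  proof (rule eventually_mono)
    fix N :: nat assume "0 < N"
    have "real N \<le> 2 * real ((N+1) div 2)" by linarith
    then show "1/2 \<le> real ((N+1) div 2) / real N" using \<open>0<N\<close> by (simp add: field_simps)
  qed
  show "\<forall>\<^sub>F N in sequentially. real ((N+1) div 2) / real N \<le> 1/2 + 1/(2 * real N)"
    using eventually_gt_at_top[of 0]
  proof (rule eventually_mono)
    fix N :: nat assume "0 < N"
    have "2 * real ((N+1) div 2) \<le> real N + 1" by linarith
    then show "real ((N+1) div 2) / real N \<le> 1/2 + 1/(2 * real N)" using \<open>0<N\<close> by (simp add: field_simps)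
  qed
  have "(\<lambda>N. 1/2 + 1/(2 * real N)) \<longlonglongrightarrow> 1/2 + 0"
    by (intro tendsto_add tendsto_const inv2)
  then show "(\<lambda>N. 1/2 + 1/(2 * real N)) \<longlonglongrightarrow> 1/2" by simp
qed simp

lemma half_down_lim: "(\<lambda>N::nat. real (N div 2) / real N) \<longlonglongrightarrow> 1/2"
proof (rule tendsto_sandwich[of "\<lambda>N. 1/2 - 1/(2 * real N)" _ _ "\<lambda>N. 1/2"])
  show "\<forall>\<^sub>F N in sequentially. 1/2 - 1/(2 * real N) \<le> real (N div 2) / real N"
    using eventually_gt_at_top[of 0]
  proof (rule eventually_mono)
    fix N :: nat assume "0 < N"
    have "real N \<le> 2 * real (N div 2) + 1" by linarith
    then have h: "real N * real N \<le> real N * (2 * real (N div 2) + 1)"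
      by (intro mult_left_mono) auto
    have "1/2 - 1/(2 * real N) = (real N * real N - real N) / (2 * real N * real N)" 
      "real (N div 2) / real N = (real N * (2 * real (N div 2) + 1) - real N) / (2 * real N * real N)"
      using \<open>0<N\<close> by (simp_all add: field_simps)
    then show "1/2 - 1/(2 * real N) \<le> real (N div 2) / real N" 
      using h \<open>0<N\<close> by (simp add: divide_right_mono)
  qed
  show "\<forall>\<^sub>F N in sequentially. real (N div 2) / real N \<le> 1/2"
    using eventually_gt_at_top[of 0]
  proof (rule eventually_mono)
    fix N :: nat assume "0 < N"
    have "2 * real (N div 2) \<le> real N" by linarith
    then show "real (N div 2) / real N \<le> 1/2" using \<open>0<N\<close> by (simp add: field_simps)
  qed
  have "(\<lambda>N. 1/2 - 1/(2 * real N)) \<longlonglongrightarrow> 1/2 - 0"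
    by (intro tendsto_diff tendsto_const inv2)
  then show "(\<lambda>N. 1/2 - 1/(2 * real N)) \<longlonglongrightarrow> 1/2" by simp
qed simp

lemma filterlim_half_up: "filterlim (\<lambda>N::nat. (N+1) div 2) at_top at_top"
  unfolding filterlim_at_top
proof
  fix Z :: nat
  show "\<forall>\<^sub>F N in at_top. Z \<le> (N+1) div 2"
    using eventually_ge_at_top[of "2*Z"] by (rule eventually_mono) linarith
qed

lemma filterlim_half_down: "filterlim (\<lambda>N::nat. N div 2) at_top at_top"
  unfolding filterlim_at_top
proof
  fix Z :: nat
  show "\<forall>\<^sub>F N in at_top. Z \<le> N div 2"
    using eventually_ge_at_top[of "2*Z"] by (rule eventually_mono) linarith
qed

lemma ratio_compose:
  assumes "(\<lambda>N. real (card {n\<in>B. n<N}) / real N) \<longlonglongrightarrow> b"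
    and "filterlim g at_top at_top" and "(\<lambda>N::nat. real (g N) / real N) \<longlonglongrightarrow> 1/2"
  shows "(\<lambda>N. real (card {n\<in>B. n< g N}) / real N) \<longlonglongrightarrow> b/2"
proof -
  have 1: "(\<lambda>N. real (card {n\<in>B. n< g N}) / real (g N)) \<longlonglongrightarrow> b"
    using filterlim_compose[OF assms(1) assms(2)] by (simp add: o_def)
  have eq: "real (card {n\<in>B. n< g N}) / real N = real (card {n\<in>B. n< g N}) / real (g N) * (real (g N) / real N)" for N
  proof (cases "g N = 0")
    case True then show ?thesis by simp
  next
    case False then show ?thesis by simp
  qed
  show ?thesis unfolding eq using tendsto_mult[OF 1 assms(3)] by simp
qed

lemma hasdens_split:
  assumes "hasdens {n. 2*n \<in> A} a" "hasdens {n. 2*n+1 \<in> A} b"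
  shows "hasdens A ((a+b)/2)"
proof -
  have 1: "(\<lambda>N. real (card {m\<in>{n. 2*n\<in>A}. m < (N+1) div 2}) / real N) \<longlonglongrightarrow> a/2"
    using ratio_compose[OF assms(1)[unfolded hasdens_def] filterlim_half_up half_up_lim] .
  have 2: "(\<lambda>N. real (card {m\<in>{n. 2*n+1\<in>A}. m < N div 2}) / real N) \<longlonglongrightarrow> b/2"
    using ratio_compose[OF assms(2)[unfolded hasdens_def] filterlim_half_down half_down_lim] .
  have eq: "(\<lambda>N. real (card {n\<in>A. n<N}) / real N) = (\<lambda>N. real (card {m\<in>{n. 2*n\<in>A}. m < (N+1) div 2}) / real N + real (card {m\<in>{n. 2*n+1\<in>A}. m < N div 2}) / real N)"
    by (rule ext) (subst card_split, simp add: add_divide_distrib)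
  show ?thesis unfolding hasdens_def eq
    using tendsto_add[OF 1 2] by (simp add: add_divide_distrib)
qed

lemma hasdens_UNIV: "hasdens UNIV 1"
proof -
  have "(\<lambda>N. real (card {n\<in>(UNIV::nat set). n<N}) / real N) \<longlonglongrightarrow> 1"
  proof (rule Lim_transform_eventually[of "\<lambda>N. 1"])
    show "\<forall>\<^sub>F N in sequentially. 1 = real (card {n\<in>(UNIV::nat set). n<N}) / real N"
      using eventually_gt_at_top[of "0::nat"] by (rule eventually_mono) simp
  qed simp
  then show ?thesis by (simp add: hasdens_def)
qed

lemma hasdens_empty: "hasdens {} 0"
  by (simp add: hasdens_def)



definition Aset :: "nat \<Rightarrow> int \<Rightarrow> nat set" where "Aset t k = {n. dd t (2*n) = k}"
definition Bset :: "nat \<Rightarrow> int \<Rightarrow> nat set" where "Bset t k = {n. dd t (2*n+1) = k}"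
definition DE :: "nat \<Rightarrow> bool" where
  "DE t \<longleftrightarrow> (\<forall>k. (\<exists>d. hasdens (Aset t k) d) \<and> (\<exists>d. hasdens (Bset t k) d))"

lemma DE_A: "DE t \<Longrightarrow> hasdens (Aset t k) (a_dens t k)"
  unfolding DE_def a_dens_def Aset_def using hasdens_asym by metis
lemma DE_B: "DE t \<Longrightarrow> hasdens (Bset t k) (b_dens t k)"
  unfolding DE_def b_dens_def Bset_def using hasdens_asym by metis

lemma genrec:
  assumes "DE s" "\<And>m. f (2*m) = dd s (2*m) + u" "\<And>m. f (2*m+1) = dd s (2*m+1) + w"
  shows "hasdens {n. f n = k} ((a_dens s (k-u) + b_dens s (k-w))/2)"
proof (rule hasdens_split)
  have "{n. 2*n \<in> {n. f n = k}} = {n. dd s (2*n) + u = k}" by (simp only: mem_Collect_eq assms(2))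
  also have "\<dots> = Aset s (k-u)" by (auto simp: Aset_def)
  finally have "{n. 2*n \<in> {n. f n = k}} = Aset s (k-u)" .
  then show "hasdens {n. 2*n \<in> {n. f n = k}} (a_dens s (k-u))" using DE_A[OF assms(1)] by simp
  have "{n. 2*n+1 \<in> {n. f n = k}} = {n. dd s (2*n+1) + w = k}" by (simp only: mem_Collect_eq assms(3))
  also have "\<dots> = Bset s (k-w)" by (auto simp: Bset_def)
  finally have "{n. 2*n+1 \<in> {n. f n = k}} = Bset s (k-w)" .
  then show "hasdens {n. 2*n+1 \<in> {n. f n = k}} (b_dens s (k-w))" using DE_B[OF assms(1)] by simp
qed

lemma q_2m: "q (2*m) = 0" by (simp add: q_def)
lemma q_2m1: "q (2*m+1) = 1" by (simp add: q_def)
lemma q_2m_add: "q (2*m + x) = q x" by (simp add: q_def)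
lemma q_2m1_add: "q (2*m + 1 + x) = q (x+1)" by (simp add: q_def)
lemma q_range: "q n = 0 \<or> q n = 1" by (simp add: q_def)

lemma recA_e: "DE t \<Longrightarrow> hasdens (Aset (2*t) k) ((a_dens t (k - 0) + b_dens t (k - 0))/2)"
proof -
  assume h: "DE t"
  have "Aset (2*t) k = {n. dd t n = k}" by (simp add: Aset_def dd_ee)
  then show ?thesis using genrec[OF h, of "dd t" 0 0 k] by simp
qed

lemma recB_e: "DE t \<Longrightarrow> hasdens (Bset (2*t) k) ((a_dens t (k - q t) + b_dens t (k - (q (t+1) - 1)))/2)"
proof -
  assume h: "DE t"
  have "Bset (2*t) k = {n. dd t n + q (n+t) - q n = k}" by (simp only: Bset_def dd_eo)
  moreover have "hasdens {n. dd t n + q (n+t) - q n = k} ((a_dens t (k - q t) + b_dens t (k - (q (t+1) - 1)))/2)"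
    by (rule genrec[OF h]) (simp_all add: q_def)
  ultimately show ?thesis by simp
qed

lemma recA_o: "DE t \<Longrightarrow> hasdens (Aset (2*t+1) k) ((a_dens t (k - q t) + b_dens t (k - q (t+1)))/2)"
proof -
  assume h: "DE t"
  have "Aset (2*t+1) k = {n. dd t n + q (n+t) = k}" by (simp only: Aset_def dd_oe)
  moreover have "hasdens {n. dd t n + q (n+t) = k} ((a_dens t (k - q t) + b_dens t (k - q (t+1)))/2)"
    by (rule genrec[OF h]) (simp_all add: q_def)
  ultimately show ?thesis by simp
qed

lemma recB_o: "DE (t+1) \<Longrightarrow> hasdens (Bset (2*t+1) k) ((a_dens (t+1) (k - 0) + b_dens (t+1) (k - (-1)))/2)"
proof -
  assume h: "DE (t+1)"
  have "Bset (2*t+1) k = {n. dd (t+1) n - q n = k}" by (simp only: Bset_def dd_oo)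
  moreover have "hasdens {n. dd (t+1) n - q n = k} ((a_dens (t+1) (k - 0) + b_dens (t+1) (k - (-1)))/2)"
    by (rule genrec[OF h]) (simp_all add: q_def)
  ultimately show ?thesis by simp
qed

lemma dd0: "dd 0 n = 0" by (simp add: dd_def)
lemma dd1_e: "dd 1 (2*n) = q n" using dd_oe[of 0 n] by (simp add: dd0)
lemma dd1_o: "dd 1 (2*n+1) = dd 1 n - q n" using dd_oo[of 0 n] by simp

lemma dd1_le: "dd 1 n \<le> 1"
proof (induction n rule: less_induct)
  case (less n)
  show ?case
  proof (cases "even n")
    case True
    then obtain m where "n = 2*m" by blast
    then have "dd 1 n = q m" by (simp only: dd1_e)
    then show ?thesis using q_range[of m] by auto
  next
    case False
    then obtain m where m: "n = 2*m+1" using oddE by blast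
    then have "m < n" by simp
    then have "dd 1 n = dd 1 m - q m" using m by (simp only: dd1_o)
    then show ?thesis using less.IH[of m] \<open>m < n\<close> q_range[of m] by auto
  qed
qed

lemma DE0: "DE 0"
proof -
  have "Aset 0 k = (if k = 0 then UNIV else {})" "Bset 0 k = (if k = 0 then UNIV else {})" for k
    by (auto simp: Aset_def Bset_def dd0)
  then show ?thesis unfolding DE_def using hasdens_UNIV hasdens_empty by (metis (full_types))
qed

lemma DE1_A: "\<exists>d. hasdens (Aset 1 k) d"
  using recA_o[OF DE0, of k] by auto

lemma DE1_B_aux: "\<forall>k. k \<ge> 2 - int j \<longrightarrow> (\<exists>d. hasdens (Bset 1 k) d)"
proof (induction j)
  case 0
  have "Bset 1 k = {}" if "k \<ge> 2" for k
  proof -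
    have "dd 1 (2*n+1) \<noteq> k" for n using dd1_le[of "2*n+1"] that by linarith
    then show ?thesis unfolding Bset_def by blast
  qed
  then show ?case using hasdens_empty by auto
next
  case (Suc j)
  show ?case
  proof (intro allI impI)
    fix k :: int assume k: "k \<ge> 2 - int (Suc j)"
    have "k+1 \<ge> 2 - int j" using k by simp
    then obtain b where b: "hasdens (Bset 1 (k+1)) b" using Suc.IH by blast
    obtain a where a: "hasdens (Aset 1 k) a" using DE1_A by blast
    have h1: "dd 1 (2*(2*n)+1) = dd 1 (2*n)" for n by (simp only: dd1_o q_2m)
    have e1: "{n. 2*n \<in> Bset 1 k} = Aset 1 k"
      unfolding Bset_def Aset_def mem_Collect_eq h1 ..
    have h2: "dd 1 (2*(2*n+1)+1) = dd 1 (2*n+1) - 1" for n by (simp only: dd1_o q_2m1)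
    have h3: "(dd 1 (2*n+1) - 1 = k) = (dd 1 (2*n+1) = k+1)" for n by linarith
    have e2: "{n. 2*n+1 \<in> Bset 1 k} = Bset 1 (k+1)"
      unfolding Bset_def mem_Collect_eq h2 h3 ..
    show "\<exists>d. hasdens (Bset 1 k) d" using hasdens_split[of "Bset 1 k" a b] a b e1 e2 by auto
  qed
qed

lemma DE1: "DE 1"
  unfolding DE_def
proof
  fix k :: int
  have "k \<ge> 2 - int (nat (2-k))" by simp
  then show "(\<exists>d. hasdens (Aset 1 k) d) \<and> (\<exists>d. hasdens (Bset 1 k) d)"
    using DE1_A DE1_B_aux[of "nat (2-k)"] by blast
qed

lemma DE_all: "DE t"
proof (induction t rule: less_induct)
  case (less t)
  show ?case
  proof (cases "t \<le> 1")
    case True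
    then have "t = 0 \<or> t = 1" by auto
    then show ?thesis using DE0 DE1 by auto
  next
    case False
    then have t1: "t > 1" by simp
    show ?thesis
    proof (cases "even t")
      case True
      then obtain j where s: "t = 2*j" by blast
      then have "j < t" using t1 by simp
      then have "DE j" using less.IH by simp
      show ?thesis unfolding DE_def s using recA_e[OF \<open>DE j\<close>] recB_e[OF \<open>DE j\<close>] by blast
    next
      case False
      then obtain j where s: "t = 2*j+1" using oddE by blast
      then have "j < t" "j+1 < t" using t1 by simp_all
      then have "DE j" "DE (j+1)" using less.IH by simp_all
      show ?thesis unfolding DE_def s using recA_o[OF \<open>DE j\<close>] recB_o[OF \<open>DE (j+1)\<close>] by blast
    qed
  qed
qed



definition mom3 :: "(int \<Rightarrow> real) \<Rightarrow> real \<Rightarrow> real \<Rightarrow> real \<Rightarrow> bool" where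
  "mom3 p s0 m s \<longleftrightarrow> (\<forall>k. 0 \<le> p k) \<and> (p has_sum s0) UNIV \<and>
     ((\<lambda>k. of_int k * p k) has_sum m) UNIV \<and> ((\<lambda>k. (of_int k)^2 * p k) has_sum s) UNIV"

definition shiftd :: "int \<Rightarrow> (int \<Rightarrow> real) \<Rightarrow> int \<Rightarrow> real" where
  "shiftd u p = (\<lambda>k. p (k - u))"

lemma bij_shift: "bij_betw (\<lambda>k::int. k + u) UNIV UNIV"
  by (rule bij_betwI[of _ _ _ "\<lambda>k. k - u"]) auto

lemma has_sum_shift: "((\<lambda>k. f (k - u)) has_sum S) UNIV \<longleftrightarrow> ((\<lambda>j. f j) has_sum S) UNIV" for f :: "int \<Rightarrow> real"
proof -
  have "((\<lambda>j. (\<lambda>k. f (k - u)) (j + u)) has_sum S) UNIV \<longleftrightarrow> ((\<lambda>k. f (k - u)) has_sum S) UNIV"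
    by (rule has_sum_reindex_bij_betw[OF bij_shift])
  then show ?thesis by simp
qed

lemma mom3_shift:
  assumes "mom3 p s0 m s"
  shows "mom3 (shiftd u p) s0 (m + of_int u * s0) (s + 2 * of_int u * m + (of_int u)^2 * s0)"
proof -
  from assms have nn: "\<forall>k. 0 \<le> p k" and h0: "(p has_sum s0) UNIV"
    and h1: "((\<lambda>k. of_int k * p k) has_sum m) UNIV" and h2: "((\<lambda>k. (of_int k)^2 * p k) has_sum s) UNIV"
    by (auto simp: mom3_def)
  have a0: "((\<lambda>k. p (k - u)) has_sum s0) UNIV" using h0 has_sum_shift[of p u s0] by simp
  have "((\<lambda>j. of_int j * p j + of_int u * p j) has_sum (m + of_int u * s0)) UNIV"
    by (intro has_sum_add h1 has_sum_cmult_right h0)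
  then have a1: "((\<lambda>k. of_int k * p (k - u)) has_sum (m + of_int u * s0)) UNIV"
    using has_sum_shift[of "\<lambda>k. of_int (k+u) * p k" u] by (simp add: algebra_simps)
  have "((\<lambda>j. (of_int j)^2 * p j + (2 * of_int u) * (of_int j * p j) + (of_int u)^2 * p j) has_sum
           (s + 2 * of_int u * m + (of_int u)^2 * s0)) UNIV"
    by (intro has_sum_add h2 has_sum_cmult_right h1 h0)
  then have a2: "((\<lambda>k. (of_int k)^2 * p (k - u)) has_sum (s + 2 * of_int u * m + (of_int u)^2 * s0)) UNIV"
    using has_sum_shift[of "\<lambda>k. (of_int (k+u))^2 * p k" u] by (simp add: algebra_simps power2_eq_square)
  show ?thesis unfolding mom3_def shiftd_def using nn a0 a1 a2 by simp
qed

lemma mom3_mix: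
  assumes "mom3 p s0 m s" "mom3 p' s0' m' s'"
  shows "mom3 (\<lambda>k. (p k + p' k)/2) ((s0+s0')/2) ((m+m')/2) ((s+s')/2)"
proof -
  have half: "((\<lambda>k. f k / 2) has_sum (x/2)) UNIV" if "(f has_sum x) UNIV" for f :: "int \<Rightarrow> real" and x
    using has_sum_cmult_left[OF that, of "1/2"] by simp
  from assms show ?thesis unfolding mom3_def
    by (auto simp: add_divide_distrib distrib_left
             intro!: half has_sum_add simp del: divide_const_simps(1))
qed

definition mom :: "(int \<Rightarrow> real) \<Rightarrow> real \<Rightarrow> real \<Rightarrow> bool" where
  "mom p m s \<longleftrightarrow> mom3 p 1 m s"

lemma mom_mean: "mom p m s \<Longrightarrow> dist_mean p = m"
  unfolding mom_def mom3_def dist_mean_def by (auto intro: infsumI)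

lemma mom_var: "mom p m s \<Longrightarrow> dist_var p = s - m^2"
proof -
  assume h: "mom p m s"
  then have mm: "dist_mean p = m" by (rule mom_mean)
  from h have h0: "(p has_sum 1) UNIV"
    and h1: "((\<lambda>k. of_int k * p k) has_sum m) UNIV" and h2: "((\<lambda>k. (of_int k)^2 * p k) has_sum s) UNIV"
    by (auto simp: mom_def mom3_def)
  have "((\<lambda>k. (of_int k)^2 * p k + (-2 * m) * (of_int k * p k) + m^2 * p k) has_sum (s + (-2*m)*m + m^2*1)) UNIV"
    by (intro has_sum_add h2 has_sum_cmult_right h1 h0)
  moreover have "(\<lambda>k. (of_int k)^2 * p k + (-2 * m) * (of_int k * p k) + m^2 * p k) = (\<lambda>k. (of_int k - m)^2 * p k)"
    by (rule ext) (simp add: power2_eq_square algebra_simps)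
  ultimately have "((\<lambda>k. (of_int k - m)^2 * p k) has_sum (s - m^2)) UNIV" by (simp add: power2_eq_square)
  then show ?thesis unfolding dist_var_def mm by (rule infsumI)
qed

lemma mom_shiftmix:
  assumes "mom p1 m1 s1" "mom p2 m2 s2"
  shows "mom (\<lambda>k. (p1 (k - u) + p2 (k - w))/2) ((m1 + of_int u + m2 + of_int w)/2)
           (((s1 + 2 * of_int u * m1 + (of_int u)^2) + (s2 + 2 * of_int w * m2 + (of_int w)^2))/2)"
proof -
  have "mom3 (\<lambda>k. (shiftd u p1 k + shiftd w p2 k)/2) ((1+1)/2) (((m1 + of_int u * 1) + (m2 + of_int w * 1))/2)
           (((s1 + 2 * of_int u * m1 + (of_int u)^2 * 1) + (s2 + 2 * of_int w * m2 + (of_int w)^2 * 1))/2)"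
    using assms unfolding mom_def by (intro mom3_mix mom3_shift)
  then show ?thesis unfolding mom_def shiftd_def by (simp add: add.assoc)
qed

lemma var_shiftmix:
  assumes "mom p1 m1 s1" "mom p2 m2 s2"
  shows "dist_var (\<lambda>k. (p1 (k - u) + p2 (k - w))/2) = (dist_var p1 + dist_var p2)/2 + ((m1 + of_int u) - (m2 + of_int w))^2/4"
    and "dist_mean (\<lambda>k. (p1 (k - u) + p2 (k - w))/2) = (m1 + of_int u + m2 + of_int w)/2"
proof -
  note e1 = mom_var[OF mom_shiftmix[OF assms, of u w]]
  note e2 = mom_var[OF assms(1)]
  note e3 = mom_var[OF assms(2)]
  show "dist_var (\<lambda>k. (p1 (k - u) + p2 (k - w))/2) = (dist_var p1 + dist_var p2)/2 + ((m1 + of_int u) - (m2 + of_int w))^2/4"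
    unfolding e1 e2 e3 by (simp add: power2_eq_square field_simps)
  show "dist_mean (\<lambda>k. (p1 (k - u) + p2 (k - w))/2) = (m1 + of_int u + m2 + of_int w)/2"
    by (rule mom_mean[OF mom_shiftmix[OF assms]])
qed



lemma aA: "a_dens t k = asym_density (Aset t k)" by (simp add: a_dens_def Aset_def)
lemma bB: "b_dens t k = asym_density (Bset t k)" by (simp add: b_dens_def Bset_def)

lemma RA_e: "a_dens (2*t) = (\<lambda>k. (a_dens t (k - 0) + b_dens t (k - 0))/2)"
proof (rule ext)
  fix k
  have "a_dens (2*t) k = asym_density (Aset (2*t) k)" by (rule aA)
  also have "\<dots> = (a_dens t (k - 0) + b_dens t (k - 0))/2" by (rule hasdens_asym[OF recA_e[OF DE_all]])
  finally show "a_dens (2*t) k = (a_dens t (k - 0) + b_dens t (k - 0))/2" .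
qed
lemma RB_e: "b_dens (2*t) = (\<lambda>k. (a_dens t (k - q t) + b_dens t (k - (q (t+1) - 1)))/2)"
proof (rule ext)
  fix k
  have "b_dens (2*t) k = asym_density (Bset (2*t) k)" by (rule bB)
  also have "\<dots> = (a_dens t (k - q t) + b_dens t (k - (q (t+1) - 1)))/2" by (rule hasdens_asym[OF recB_e[OF DE_all]])
  finally show "b_dens (2*t) k = (a_dens t (k - q t) + b_dens t (k - (q (t+1) - 1)))/2" .
qed
lemma RA_o: "a_dens (2*t+1) = (\<lambda>k. (a_dens t (k - q t) + b_dens t (k - q (t+1)))/2)"
proof (rule ext)
  fix k
  have "a_dens (2*t+1) k = asym_density (Aset (2*t+1) k)" by (rule aA)
  also have "\<dots> = (a_dens t (k - q t) + b_dens t (k - q (t+1)))/2" by (rule hasdens_asym[OF recA_o[OF DE_all]])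
  finally show "a_dens (2*t+1) k = (a_dens t (k - q t) + b_dens t (k - q (t+1)))/2" .
qed
lemma RB_o: "b_dens (2*t+1) = (\<lambda>k. (a_dens (t+1) (k - 0) + b_dens (t+1) (k - (-1)))/2)"
proof (rule ext)
  fix k
  have "b_dens (2*t+1) k = asym_density (Bset (2*t+1) k)" by (rule bB)
  also have "\<dots> = (a_dens (t+1) (k - 0) + b_dens (t+1) (k - (-1)))/2" by (rule hasdens_asym[OF recB_o[OF DE_all]])
  finally show "b_dens (2*t+1) k = (a_dens (t+1) (k - 0) + b_dens (t+1) (k - (-1)))/2" .
qed

definition delta0 :: "int \<Rightarrow> real" where "delta0 k = (if k = 0 then 1 else 0)"

lemma a0: "a_dens 0 = delta0"
proof (rule ext)
  fix k
  have "Aset 0 k = (if k = 0 then UNIV else {})" by (auto simp: Aset_def dd0)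
  then show "a_dens 0 k = delta0 k" unfolding aA delta0_def
    using hasdens_asym[OF hasdens_UNIV] hasdens_asym[OF hasdens_empty] by simp
qed
lemma b0: "b_dens 0 = delta0"
proof (rule ext)
  fix k
  have "Bset 0 k = (if k = 0 then UNIV else {})" by (auto simp: Bset_def dd0)
  then show "b_dens 0 k = delta0 k" unfolding bB delta0_def
    using hasdens_asym[OF hasdens_UNIV] hasdens_asym[OF hasdens_empty] by simp
qed

lemma has_sum_at0: "(\<And>k. k \<noteq> 0 \<Longrightarrow> f k = 0) \<Longrightarrow> (f has_sum f 0) (UNIV::int set)"
proof -
  assume h: "\<And>k. k \<noteq> 0 \<Longrightarrow> f k = 0"
  have "(f has_sum f 0) UNIV \<longleftrightarrow> (f has_sum f 0) {0}"
    by (rule has_sum_cong_neutral) (auto simp: h)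
  moreover have "(f has_sum f 0) {0}" using has_sum_finite[of "{0}" f] by simp
  ultimately show ?thesis by simp
qed

lemma mom_delta: "mom delta0 0 0"
  unfolding mom_def mom3_def
  using has_sum_at0[of delta0] has_sum_at0[of "\<lambda>k. of_int k * delta0 k"] has_sum_at0[of "\<lambda>k. (of_int k)^2 * delta0 k"]
  by (simp add: delta0_def)

lemma a1: "a_dens 1 = (\<lambda>k. (delta0 (k - 0) + delta0 (k - 1))/2)"
  using RA_o[of 0] by (simp add: a0 b0 q_def)

lemma mom_a1: "mom (a_dens 1) (1/2) (1/2)"
  using mom_shiftmix[OF mom_delta mom_delta, of 0 1] unfolding a1 by simp

lemma hasdens_bounds: "hasdens A d \<Longrightarrow> 0 \<le> d \<and> d \<le> 1"
proof -
  assume h: "hasdens A d"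
  then have L: "(\<lambda>N. real (card {n\<in>A. n<N}) / real N) \<longlonglongrightarrow> d" by (simp add: hasdens_def)
  have "card {n\<in>A. n<N} \<le> N" for N
  proof -
    have "card {n\<in>A. n<N} \<le> card {..<N}" by (rule card_mono) auto
    then show ?thesis by simp
  qed
  then have "real (card {n\<in>A. n<N}) / real N \<le> 1" for N
    by (cases "N = 0") (auto simp: divide_le_eq)
  then have "d \<le> 1" using LIMSEQ_le_const2[OF L] by blast
  moreover have "0 \<le> d" using LIMSEQ_le_const[OF L] by auto
  ultimately show ?thesis by simp
qed

lemma a_bounds: "0 \<le> a_dens t k \<and> a_dens t k \<le> 1"
  using hasdens_bounds[OF DE_A[OF DE_all]] by blast
lemma b_bounds: "0 \<le> b_dens t k \<and> b_dens t k \<le> 1"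
  using hasdens_bounds[OF DE_B[OF DE_all]] by blast

lemma b1_rec: "b_dens 1 k = (a_dens 1 k + b_dens 1 (k+1))/2"
  using RB_o[of 0] by (simp add: fun_eq_iff)

lemma b1_big: "k \<ge> 2 \<Longrightarrow> b_dens 1 k = 0"
proof -
  assume k: "k \<ge> 2"
  have "dd 1 (2*n+1) \<noteq> k" for n using dd1_le[of "2*n+1"] k by linarith
  then have "Bset 1 k = {}" unfolding Bset_def by blast
  then show ?thesis unfolding bB using hasdens_asym[OF hasdens_empty] by simp
qed

lemma b1_neg: "b_dens 1 (- int n) \<le> 2 * (1/2)^n"
proof (induction n)
  case 0
  then show ?case using b_bounds[of 1 0] by simp
next
  case (Suc n)
  have "a_dens 1 (- int (Suc n)) = 0" unfolding a1 by (simp add: delta0_def)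
  moreover have "- int (Suc n) + 1 = - int n" by simp
  ultimately have "b_dens 1 (- int (Suc n)) = b_dens 1 (- int n) / 2" using b1_rec[of "- int (Suc n)"] by simp
  then show ?case using Suc.IH by simp
qed

lemma b1_bound: "b_dens 1 k \<le> 2 * (1/2)^(nat \<bar>k\<bar>)"
proof (cases "k < 0")
  case True
  then have "k = - int (nat \<bar>k\<bar>)" by simp
  then show ?thesis using b1_neg[of "nat \<bar>k\<bar>"] by metis
next
  case False
  then consider "k = 0" | "k = 1" | "k \<ge> 2" by linarith
  then show ?thesis
  proof cases
    case 1 then show ?thesis using b_bounds[of 1 k] by simp
  next
    case 2 then show ?thesis using b_bounds[of 1 k] by simp
  next
    case 3 then show ?thesis using b1_big by simp
  qed
qed

definition G :: "int \<Rightarrow> real" where "G k = (1 + (of_int k)^2) * (2 * (1/2)^(nat \<bar>k\<bar>))"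
definition G' :: "nat \<Rightarrow> real" where "G' n = (1 + (real n)^2) * (2 * (1/2)^n)"

lemma G'_summable: "summable G'"
proof (rule summable_ratio_test[of "3/4" 5])
  fix n :: nat assume n: "n \<ge> 5"
  have "real n * real n \<ge> 5 * real n" using n by (intro mult_right_mono) auto
  moreover have "real n \<ge> 5" using n by simp
  ultimately have C: "1 + real n * 4 \<le> real n * real n" by linarith
  have D: "1 + (real n + 1)^2 \<le> 3/2 * (1 + (real n)^2)" using C by (simp add: power2_eq_square algebra_simps)
  have E: "(1 + (real n + 1)^2) * (1/2)^n \<le> (3/2 * (1 + (real n)^2)) * (1/2)^n"
    by (rule mult_right_mono[OF D]) simp
  have nn: "G' m \<ge> 0" for m by (simp add: G'_def)
  have "G' (Suc n) = (1 + (real n + 1)^2) * (2 * ((1/2) * (1/2)^n))"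
    unfolding G'_def power_Suc of_nat_Suc by (simp only: add.commute)
  also have "\<dots> = (1 + (real n + 1)^2) * (1/2)^n" by (simp only: mult.assoc[symmetric]) simp?
  finally have e1: "norm (G' (Suc n)) = (1 + (real n + 1)^2) * (1/2)^n" using nn[of "Suc n"] by simp
  have "3/4 * G' n = (3/4 * 2) * ((1 + (real n)^2) * (1/2)^n)" unfolding G'_def by (simp only: mult_ac)
  also have "\<dots> = (3/2 * (1 + (real n)^2)) * (1/2)^n" by simp
  finally have e2: "3/4 * norm (G' n) = (3/2 * (1 + (real n)^2)) * (1/2)^n" using nn[of n] by simp
  show "norm (G' (Suc n)) \<le> 3/4 * norm (G' n)" unfolding e1 e2 by (rule E)
qed simp

lemma G_summable: "G summable_on UNIV"
proof -
  have G'on: "G' summable_on UNIV"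
    using G'_summable by (rule summable_nonneg_imp_summable_on) (simp add: G'_def)
  have "(G \<circ> int) = G'" by (simp add: fun_eq_iff G_def G'_def)
  then have 1: "G summable_on (range int)"
    using summable_on_reindex[of int UNIV G] G'on by simp
  have "(G \<circ> (\<lambda>n. - int n)) = G'" by (simp add: fun_eq_iff G_def G'_def)
  moreover have "inj (\<lambda>n::nat. - int n)" by (simp add: inj_def)
  ultimately have 2: "G summable_on (range (\<lambda>n. - int n))"
    using summable_on_reindex[of "\<lambda>n. - int n" UNIV G] G'on by simp
  have "UNIV = range int \<union> range (\<lambda>n. - int n)"
  proof (rule set_eqI)
    fix k :: int
    show "k \<in> UNIV \<longleftrightarrow> k \<in> range int \<union> range (\<lambda>n. - int n)"
      by (cases "k \<ge> 0") (auto simp: image_iff intro: exI[of _ "nat k"] exI[of _ "nat (-k)"])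
  qed
  then show ?thesis using summable_on_union[OF 1 2] by simp
qed

lemma dom_summable:
  assumes "\<And>k. \<bar>f k\<bar> \<le> G k"
  shows "f summable_on UNIV"
proof -
  have "(\<lambda>x. norm (G x)) summable_on UNIV"
  proof -
    have "(\<lambda>x. norm (G x)) = G" by (simp add: fun_eq_iff G_def)
    then show ?thesis using G_summable by simp
  qed
  moreover have "norm (f x) \<le> norm (G x)" for x
    using assms[of x] by (simp add: G_def)
  ultimately have "(\<lambda>x. norm (f x)) summable_on UNIV"
    using summable_on_comparison_test[of "\<lambda>x. norm (G x)" UNIV "\<lambda>x. norm (f x)"] by simp
  then show ?thesis using summable_on_iff_abs_summable_on_real by blast
qed

lemma mom_b1: "mom (b_dens 1) (-1/2) (5/2)"
proof -
  let ?b = "b_dens 1"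
  have bnd: "?b k \<le> 2 * (1/2)^(nat \<bar>k\<bar>)" "0 \<le> ?b k" for k using b1_bound b_bounds by auto
  have s0: "?b summable_on UNIV"
  proof (rule dom_summable)
    fix k
    have "1 * (2 * (1/2::real)^(nat \<bar>k\<bar>)) \<le> (1 + (of_int k)^2) * (2 * (1/2)^(nat \<bar>k\<bar>))"
      by (intro mult_right_mono) auto
    moreover have "\<bar>?b k\<bar> = ?b k" using bnd[of k] by simp
    ultimately show "\<bar>?b k\<bar> \<le> G k" unfolding G_def using bnd[of k] by linarith
  qed
  have s1: "(\<lambda>k. of_int k * ?b k) summable_on UNIV"
  proof (rule dom_summable)
    fix k
    have A: "(real_of_int k)^2 = \<bar>real_of_int k\<bar> * \<bar>real_of_int k\<bar>" by (simp add: power2_eq_square)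
    have "\<bar>of_int k\<bar> \<le> 1 + (of_int k :: real)^2"
    proof (cases "\<bar>real_of_int k\<bar> \<le> 1")
      case True
      then show ?thesis using zero_le_power2[of "real_of_int k"] by linarith
    next
      case False
      then have "\<bar>real_of_int k\<bar> * 1 \<le> \<bar>real_of_int k\<bar> * \<bar>real_of_int k\<bar>" by (intro mult_left_mono) auto
      then show ?thesis unfolding A by linarith
    qed
    then show "\<bar>of_int k * ?b k\<bar> \<le> G k" unfolding G_def abs_mult
      using bnd[of k] by (intro mult_mono) auto
  qed
  have s2: "(\<lambda>k. (of_int k)^2 * ?b k) summable_on UNIV"
  proof (rule dom_summable)
    fix k
    show "\<bar>(of_int k)^2 * ?b k\<bar> \<le> G k" unfolding G_def abs_mult
      using bnd[of k] by (intro mult_mono) auto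
  qed
  define S0 where "S0 = infsum ?b UNIV"
  define S1 where "S1 = infsum (\<lambda>k. of_int k * ?b k) UNIV"
  define S2 where "S2 = infsum (\<lambda>k. (of_int k)^2 * ?b k) UNIV"
  have M: "mom3 ?b S0 S1 S2" unfolding mom3_def S0_def S1_def S2_def
    using s0 s1 s2 bnd by auto
  have Ma: "mom3 (a_dens 1) 1 (1/2) (1/2)" using mom_a1 by (simp add: mom_def)
  have "mom3 (\<lambda>k. (a_dens 1 k + shiftd (-1) ?b k)/2) ((1 + S0)/2) ((1/2 + (S1 + (-1) * S0))/2)
          ((1/2 + (S2 + 2 * (-1) * S1 + (-1)^2 * S0))/2)"
    using mom3_mix[OF Ma mom3_shift[OF M, of "-1"]] by simp
  moreover have "(\<lambda>k. (a_dens 1 k + shiftd (-1) ?b k)/2) = ?b"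
  proof (rule ext)
    fix k
    have "k - (-1) = k + (1::int)" by simp
    then show "(a_dens 1 k + shiftd (-1) ?b k)/2 = ?b k" unfolding shiftd_def using b1_rec[of k] by simp
  qed
  ultimately have M2: "mom3 ?b ((1 + S0)/2) ((1/2 + (S1 - S0))/2) ((1/2 + (S2 - 2 * S1 + S0))/2)" by simp
  have "S0 = (1 + S0)/2" using M M2 unfolding mom3_def by (meson has_sum_unique)
  then have e0: "S0 = 1" by simp
  have "S1 = (1/2 + (S1 - S0))/2" using M M2 unfolding mom3_def by (meson has_sum_unique)
  then have e1: "S1 = -1/2" using e0 by simp
  have "S2 = (1/2 + (S2 - 2 * S1 + S0))/2" using M M2 unfolding mom3_def by (meson has_sum_unique)
  then have e2: "S2 = 5/2" using e0 e1 by simp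
  show ?thesis using M unfolding mom_def e0 e1 e2 .
qed



lemma q_succ: "q (t+1) = 1 - q t" by (simp add: q_def)
lemma q_even: "even t \<Longrightarrow> q t = 0" by (simp add: q_def)
lemma q_odd: "odd t \<Longrightarrow> q t = 1" by (simp add: q_def)

lemma mom_cong: "mom p m s \<Longrightarrow> m = m' \<Longrightarrow> p = p' \<Longrightarrow> mom p' m' s" by simp

lemma mom_all: "\<exists>sa sb. mom (a_dens t) (of_int (q t) / 2) sa \<and> mom (b_dens t) (- of_int (q t) / 2) sb"
proof (induction t rule: less_induct)
  case (less t)
  show ?case
  proof (cases "t \<le> 1")
    case True
    then have "t = 0 \<or> t = 1" by auto
    then show ?thesis
    proof
      assume "t = 0" then show ?thesis using mom_delta by (auto simp: a0 b0 q_def)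
    next
      assume "t = 1" then show ?thesis using mom_a1 mom_b1 by (auto simp: q_def)
    qed
  next
    case False
    then have t1: "t > 1" by simp
    show ?thesis
    proof (cases "even t")
      case True
      then obtain j where s: "t = 2*j" by blast
      then have "j < t" using t1 by simp
      then obtain sa sb where A: "mom (a_dens j) (of_int (q j) / 2) sa" and B: "mom (b_dens j) (- of_int (q j) / 2) sb"
        using less.IH by blast
      have qq: "q (2*j) = 0" "q (j+1) = 1 - q j" by (simp_all add: q_def)
      have m1: "(of_int (q j) / 2 + of_int 0 + - of_int (q j) / 2 + of_int 0) / 2 = of_int (q (2*j)) / (2::real)"
        by (simp add: qq)
      have 1: "\<exists>s. mom (a_dens (2*j)) (of_int (q (2*j)) / 2) s"
        unfolding RA_e using mom_shiftmix[OF A B, of 0 0, unfolded m1] by blast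
      have m2: "(of_int (q j) / 2 + of_int (q j) + - of_int (q j) / 2 + of_int (q (j+1) - 1)) / 2 = - of_int (q (2*j)) / (2::real)"
        by (cases "even j") (simp_all add: q_def)
      have 2: "\<exists>s. mom (b_dens (2*j)) (- of_int (q (2*j)) / 2) s"
        unfolding RB_e using mom_shiftmix[OF A B, of "q j" "q (j+1) - 1", unfolded m2] by blast
      show ?thesis using 1 2 s by blast
    next
      case False
      then obtain j where s: "t = 2*j+1" using oddE by blast
      then have "j < t" "j+1 < t" using t1 by simp_all
      then obtain sa sb sa' sb' where A: "mom (a_dens j) (of_int (q j) / 2) sa" and B: "mom (b_dens j) (- of_int (q j) / 2) sb"
        and A': "mom (a_dens (j+1)) (of_int (q (j+1)) / 2) sa'" and B': "mom (b_dens (j+1)) (- of_int (q (j+1)) / 2) sb'"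
        using less.IH by blast
      have qq: "q (2*j+1) = 1" "q (j+1) = 1 - q j" by (simp_all add: q_def)
      have m1: "(of_int (q j) / 2 + of_int (q j) + - of_int (q j) / 2 + of_int (q (j+1))) / 2 = of_int (q (2*j+1)) / (2::real)"
        by (cases "even j") (simp_all add: q_def)
      have 1: "\<exists>s. mom (a_dens (2*j+1)) (of_int (q (2*j+1)) / 2) s"
        unfolding RA_o using mom_shiftmix[OF A B, of "q j" "q (j+1)", unfolded m1] by blast
      have m2: "(of_int (q (j+1)) / 2 + of_int 0 + - of_int (q (j+1)) / 2 + of_int (-1)) / 2 = - of_int (q (2*j+1)) / (2::real)"
        by (cases "even j") (simp_all add: q_def)
      have 2: "\<exists>s. mom (b_dens (2*j+1)) (- of_int (q (2*j+1)) / 2) s"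
        unfolding RB_o using mom_shiftmix[OF A' B', of 0 "-1", unfolded m2] by blast
      show ?thesis using 1 2 s by blast
    qed
  qed
qed

definition va :: "nat \<Rightarrow> real" where "va t = dist_var (a_dens t)"
definition vb :: "nat \<Rightarrow> real" where "vb t = dist_var (b_dens t)"
definition VV :: "nat \<Rightarrow> real" where "VV t = (va t + vb t)/2"

lemma mean_a: "dist_mean (a_dens t) = of_int (q t) / 2" using mom_all[of t] mom_mean by blast
lemma mean_b: "dist_mean (b_dens t) = - of_int (q t) / 2" using mom_all[of t] mom_mean by blast

lemma var_rec:
  "va (2*t) = VV t + (of_int (q t))^2/4"
  "vb (2*t) = VV t + (2 * of_int (q t) - of_int (q (t+1)) + 1)^2/4"
  "va (2*t+1) = VV t + (2 * of_int (q t) - of_int (q (t+1)))^2/4"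
  "vb (2*t+1) = VV (t+1) + (of_int (q (t+1)) + 1)^2/4"
proof -
  obtain sa sb where A: "mom (a_dens t) (of_int (q t) / 2) sa" and B: "mom (b_dens t) (- of_int (q t) / 2) sb"
    using mom_all by blast
  obtain sa' sb' where A': "mom (a_dens (t+1)) (of_int (q (t+1)) / 2) sa'" and B': "mom (b_dens (t+1)) (- of_int (q (t+1)) / 2) sb'"
    using mom_all by blast
  show "va (2*t) = VV t + (of_int (q t))^2/4"
    unfolding va_def VV_def vb_def RA_e var_shiftmix(1)[OF A B] by (simp add: field_simps power2_eq_square)
  show "vb (2*t) = VV t + (2 * of_int (q t) - of_int (q (t+1)) + 1)^2/4"
    unfolding va_def VV_def vb_def RB_e var_shiftmix(1)[OF A B] by (simp add: field_simps power2_eq_square)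
  show "va (2*t+1) = VV t + (2 * of_int (q t) - of_int (q (t+1)))^2/4"
    unfolding va_def VV_def vb_def RA_o var_shiftmix(1)[OF A B] by (simp add: field_simps power2_eq_square)
  show "vb (2*t+1) = VV (t+1) + (of_int (q (t+1)) + 1)^2/4"
    unfolding va_def VV_def vb_def RB_o var_shiftmix(1)[OF A' B'] by (simp add: field_simps power2_eq_square)
qed

lemma VV_rec:
  "VV (2*t) = VV t + (if odd t then 5/4 else 0)"
  "VV (2*t+1) = (VV t + VV (t+1))/2 + 5/8"
proof -
  show "VV (2*t) = VV t + (if odd t then 5/4 else 0)"
    using var_rec(1,2)[of t] unfolding VV_def[of "2*t"] by (cases "even t") (simp_all add: q_def)
  show "VV (2*t+1) = (VV t + VV (t+1))/2 + 5/8"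
    using var_rec(3,4)[of t] unfolding VV_def[of "2*t+1"] by (cases "even t") (simp_all add: q_def)
qed

lemma fix_half: "(x::real) = x/2 + 5/8 \<Longrightarrow> \<bar>x\<bar> \<le> 5/4" by linarith

lemma fix_rec1:
  fixes x y :: real
  assumes "\<bar>y\<bar> \<le> 5/4" "x = y/2 + 5/8 - (if b then 5/4 else 0)"
  shows "\<bar>x\<bar> \<le> 5/4"
proof (cases b)
  case True
  then have "x = y/2 + 5/8 - 5/4" using assms by simp
  then show ?thesis using assms(1) by linarith
next
  case False
  then have "x = y/2 + 5/8" using assms by simp
  then show ?thesis using assms(1) by linarith
qed

lemma fix_rec2:
  fixes x y :: real
  assumes "\<bar>y\<bar> \<le> 5/4" "x = y/2 - 5/8 + (if b then 5/4 else 0)"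
  shows "\<bar>x\<bar> \<le> 5/4"
proof (cases b)
  case True
  then have "x = y/2 - 5/8 + 5/4" using assms by simp
  then show ?thesis using assms(1) by linarith
next
  case False
  then have "x = y/2 - 5/8" using assms by simp
  then show ?thesis using assms(1) by linarith
qed

lemma E_bound: "\<bar>VV (t+1) - VV t\<bar> \<le> 5/4"
proof (induction t rule: less_induct)
  case (less t)
  show ?case
  proof (cases "even t")
    case True
    then obtain j where s: "t = 2*j" by blast
    have e: "VV (t+1) - VV t = (VV (j+1) - VV j)/2 + 5/8 - (if odd j then 5/4 else 0)"
      unfolding s using VV_rec[of j] by simp
    show ?thesis
    proof (cases "j = 0")
      case True
      then have "VV (t+1) - VV t = (VV (t+1) - VV t)/2 + 5/8" using e s by simp
      then show ?thesis by (rule fix_half)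
    next
      case False
      then have "j < t" using s by simp
      then show ?thesis using fix_rec1[OF less.IH[of j] e] by blast
    qed
  next
    case False
    then obtain j where s: "t = 2*j+1" using oddE by blast
    have "VV (2*(j+1)) = VV (j+1) + (if odd (j+1) then 5/4 else 0)" by (rule VV_rec(1))
    then have e: "VV (t+1) - VV t = (VV (j+1) - VV j)/2 - 5/8 + (if odd (j+1) then 5/4 else 0)"
      unfolding s using VV_rec(2)[of j] by (simp add: field_simps)
    have "j < t" using s by simp
    then show ?thesis using fix_rec2[OF less.IH[of j] e] by blast
  qed
qed

lemma var_diff: "\<bar>va s - vb s\<bar> \<le> 2"
proof (cases "even s")
  case True
  then obtain t where s: "s = 2*t" by blast
  show ?thesis using var_rec(1,2)[of t] unfolding s by (cases "even t") (simp_all add: q_def)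
next
  case False
  then obtain t where s: "s = 2*t+1" using oddE by blast
  have E: "\<bar>VV (t+1) - VV t\<bar> \<le> 5/4" by (rule E_bound)
  show ?thesis
  proof (cases "even t")
    case True
    then have "q t = 0" "q (t+1) = 1" by (simp_all add: q_def)
    then have "va s = VV t + 1/4" "vb s = VV (t+1) + 1" using var_rec(3,4)[of t] s by simp_all
    then show ?thesis using E by linarith
  next
    case False
    then have "q t = 1" "q (t+1) = 0" by (simp_all add: q_def)
    then have "va s = VV t + 1" "vb s = VV (t+1) + 1/4" using var_rec(3,4)[of t] s by simp_all
    then show ?thesis using E by linarith
  qed
qed

lemma var_nonneg: "dist_var p \<ge> 0" if "\<forall>k. p k \<ge> 0" for p
  unfolding dist_var_def using that by (intro infsum_nonneg) auto

lemma va_nonneg: "va t \<ge> 0" unfolding va_def using var_nonneg a_bounds by blast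
lemma vb_nonneg: "vb t \<ge> 0" unfolding vb_def using var_nonneg b_bounds by blast



definition Gm :: "real \<Rightarrow> real \<Rightarrow> real \<Rightarrow> complex" where
  "Gm m v \<theta> = exp (complex_of_real m * \<i> * complex_of_real \<theta> - complex_of_real (v * \<theta>^2 / 2))"

lemma sum_le1: "(\<Sum>i\<le>1. (z::complex) ^ i / fact i) = 1 + z"
  by (simp add: atMost_Suc)
lemma sum_le2: "(\<Sum>i\<le>2. (z::complex) ^ i / fact i) = 1 + z + z^2/2"
  by (simp add: atMost_Suc numeral_2_eq_2 power2_eq_square)

lemma tri3: "cmod (A - B + C) \<le> cmod A + cmod B + cmod C"
proof -
  have "cmod (A - B + C) \<le> cmod (A - B) + cmod C" by (rule norm_triangle_ineq)
  also have "cmod (A - B) \<le> cmod A + cmod B" by (rule norm_triangle_ineq4)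
  finally show ?thesis by simp
qed

lemma lin5:
  fixes x a b e c1 c2 A B :: real
  assumes "x \<le> a + b + e" "b \<le> (c1 + c2)/2" "a \<le> A" "c1 \<le> B" "c2 \<le> B"
  shows "x \<le> A + (B + B)/2 + e"
proof -
  have "(c1 + c2)/2 \<le> (B + B)/2" using assms(4,5) by (intro divide_right_mono add_mono) auto
  then have "b \<le> (B + B)/2" using order_trans[OF assms(2)] by blast
  then have "a + b + e \<le> A + (B + B)/2 + e" using assms(3) by (intro add_mono) auto
  then show ?thesis using order_trans[OF assms(1)] by blast
qed

lemma lin5':
  fixes x a b e A B E' :: real
  assumes "x \<le> a + (b + b)/2 + e" "a \<le> A" "b \<le> B" "b \<le> B" "e \<le> E'"
  shows "x \<le> A + (B + B)/2 + E'"
proof -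
  have "(b + b)/2 \<le> (B + B)/2" using assms(3) by (intro divide_right_mono add_mono) auto
  then have "a + (b + b)/2 + e \<le> A + (B + B)/2 + E'" using assms(2,5) by (intro add_mono) auto
  then show ?thesis using order_trans[OF assms(1)] by blast
qed

lemma gauss_key:
  fixes m1 m2 v1 v2 \<theta> :: real
  assumes v: "v1 \<ge> 0" "v2 \<ge> 0" and md: "\<bar>m1 - m2\<bar> \<le> 3" and vd: "\<bar>v1 - v2\<bar> \<le> 3" and th: "\<bar>\<theta>\<bar> \<le> 4"
  shows "cmod (Gm ((m1+m2)/2) ((v1+v2)/2 + (m1-m2)^2/4) \<theta> - (Gm m1 v1 \<theta> + Gm m2 v2 \<theta>)/2) \<le> 100 * exp 18 * \<bar>\<theta>\<bar>^3"
proof -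
  define a where "a = \<bar>\<theta>\<bar>"
  define d where "d = (m1 - m2)/2"
  define w where "w = (v1 - v2)/2"
  define c :: complex where "c = Complex (-(v1+v2)/4 * \<theta>^2) ((m1+m2)/2 * \<theta>)"
  define D :: complex where "D = Complex (-(w * \<theta>^2/2)) (d * \<theta>)"
  define s where "s = d^2 * \<theta>^2 / 2"
  have a0: "a \<ge> 0" and a4: "a \<le> 4" using th by (auto simp: a_def)
  have th2: "\<theta>^2 = a^2" by (simp add: a_def)
  have hd: "\<bar>d\<bar> \<le> 3/2" using md by (simp add: d_def)
  have hw: "\<bar>w\<bar> \<le> 3/2" using vd by (simp add: w_def)
  have "complex_of_real m1 * \<i> * complex_of_real \<theta> - complex_of_real (v1 * \<theta>^2/2) = c + D"
    by (simp add: complex_eq_iff c_def D_def d_def w_def field_simps)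
  then have g1: "Gm m1 v1 \<theta> = exp c * exp D" by (simp add: Gm_def exp_add)
  have "complex_of_real m2 * \<i> * complex_of_real \<theta> - complex_of_real (v2 * \<theta>^2/2) = c + (- D)"
    by (simp add: complex_eq_iff c_def D_def d_def w_def field_simps)
  then have g2: "Gm m2 v2 \<theta> = exp c * exp (- D)" unfolding Gm_def using exp_add[of c "-D"] by metis
  have "complex_of_real ((m1+m2)/2) * \<i> * complex_of_real \<theta> - complex_of_real (((v1+v2)/2 + (m1-m2)^2/4) * \<theta>^2/2) = c + (- complex_of_real s)"
    by (simp add: complex_eq_iff c_def s_def d_def field_simps power2_eq_square)
  then have g0: "Gm ((m1+m2)/2) ((v1+v2)/2 + (m1-m2)^2/4) \<theta> = exp c * exp (- complex_of_real s)"
    unfolding Gm_def using exp_add[of c "- complex_of_real s"] by metis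
  define X where "X = exp (- complex_of_real s) - (exp D + exp (- D))/2"
  have LHS: "Gm ((m1+m2)/2) ((v1+v2)/2 + (m1-m2)^2/4) \<theta> - (Gm m1 v1 \<theta> + Gm m2 v2 \<theta>)/2 = exp c * X"
    unfolding g0 g1 g2 X_def by (simp add: algebra_simps)
  have "cmod (exp c) = exp (Re c)" by simp
  also have "Re c = -(v1+v2)/4 * \<theta>^2" by (simp add: c_def)
  also have "exp (-(v1+v2)/4 * \<theta>^2) \<le> 1"
  proof -
    have h: "0 \<le> (v1+v2)/4 * \<theta>^2" using v by simp
    have "-(v1+v2)/4 * \<theta>^2 = - ((v1+v2)/4 * \<theta>^2)" by (simp add: algebra_simps)
    then have "-(v1+v2)/4 * \<theta>^2 \<le> 0" using h by linarith
    then show ?thesis by simp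
  qed
  finally have ec: "cmod (exp c) \<le> 1" .
  have s0: "s \<ge> 0" by (simp add: s_def)
  have T1: "cmod (exp (- complex_of_real s) - (1 - complex_of_real s)) \<le> exp s * s^2"
    using Taylor_exp_field[of "- complex_of_real s" 1] s0 by (simp add: sum_le1 power2_eq_square)
  have T2: "cmod (exp D - (1 + D + D^2/2)) \<le> exp (cmod D) * cmod D ^ 3 / 2"
    using Taylor_exp_field[of D 2] by (simp add: sum_le2)
  have T3: "cmod (exp (-D) - (1 - D + D^2/2)) \<le> exp (cmod D) * cmod D ^ 3 / 2"
    using Taylor_exp_field[of "-D" 2] by (simp add: sum_le2)
  define E where "E = - complex_of_real s - D^2/2"
  have Eeq: "E = Complex (-(w^2 * \<theta>^4/8)) (d * w * \<theta>^3/2)"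
    by (simp add: complex_eq_iff E_def D_def s_def power2_eq_square power3_eq_cube power4_eq_xxxx field_simps)
  have Xeq: "X = (exp (- complex_of_real s) - (1 - complex_of_real s))
      - ((exp D - (1 + D + D^2/2)) + (exp (-D) - (1 - D + D^2/2)))/2 + E"
    unfolding X_def E_def by (simp add: field_simps)
  have nX: "cmod X \<le> exp s * s^2 + (exp (cmod D) * cmod D ^ 3 / 2 + exp (cmod D) * cmod D ^ 3 / 2)/2 + cmod E"
  proof -
    have h1: "cmod X \<le> cmod (exp (- complex_of_real s) - (1 - complex_of_real s))
      + cmod (((exp D - (1 + D + D^2/2)) + (exp (-D) - (1 - D + D^2/2)))/2) + cmod E"
      unfolding Xeq by (rule tri3)
    have h2: "cmod (((exp D - (1 + D + D^2/2)) + (exp (-D) - (1 - D + D^2/2)))/2)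
        \<le> (cmod (exp D - (1 + D + D^2/2)) + cmod (exp (-D) - (1 - D + D^2/2)))/2"
      using norm_triangle_ineq[of "exp D - (1 + D + D^2/2)" "exp (-D) - (1 - D + D^2/2)"] by (simp add: norm_divide)
    show ?thesis by (rule lin5[OF h1 h2 T1 T2 T3])
  qed
  have a2: "a^2 \<le> 4 * a" using a0 a4 by (simp add: power2_eq_square mult_right_mono)
  have a4': "a^4 \<le> 4 * a^3"
  proof -
    have "a * a^3 \<le> 4 * a^3" using a0 a4 by (intro mult_right_mono) auto
    then show ?thesis by (simp add: power_Suc[symmetric] numeral_eq_Suc)
  qed
  have nD: "cmod D \<le> 9/2 * a"
  proof -
    have r1: "cmod D \<le> \<bar>Re D\<bar> + \<bar>Im D\<bar>" by (rule cmod_le)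
    have r2: "\<bar>Re D\<bar> = \<bar>w\<bar> * a^2 / 2" by (simp add: D_def th2 abs_mult)
    have r3: "\<bar>Im D\<bar> = \<bar>d\<bar> * a" by (simp add: D_def a_def abs_mult)
    have "\<bar>w\<bar> * a^2 \<le> 3/2 * (4 * a)"
      using hw a2 by (intro mult_mono) auto
    then have r4: "\<bar>w\<bar> * a^2 / 2 \<le> 3 * a" by simp
    have r5: "\<bar>d\<bar> * a \<le> 3/2 * a" using hd a0 by (intro mult_right_mono) auto
    show ?thesis using r1 r2 r3 r4 r5 by linarith
  qed
  have nD0: "cmod D \<ge> 0" by simp
  have eD: "exp (cmod D) \<le> exp 18" using nD a4 by simp
  have D3: "cmod D ^ 3 \<le> (9/2 * a)^3" using nD nD0 by (intro power_mono) auto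
  have T2': "exp (cmod D) * cmod D ^ 3 / 2 \<le> exp 18 * ((9/2 * a)^3) / 2"
    using eD D3 by (intro divide_right_mono mult_mono) auto
  have sb: "s \<le> 9/8 * a^2"
  proof -
    have "d^2 \<le> (3/2)^2" using hd by (metis abs_le_square_iff abs_of_nonneg zero_le_divide_iff zero_le_numeral)
    then have "d^2 * a^2 \<le> (3/2)^2 * a^2" by (intro mult_right_mono) auto
    then have h: "d^2 * a^2 \<le> 9/4 * a^2" by (simp add: power_divide)
    have e: "s = d^2 * a^2 / 2" by (simp add: s_def th2)
    have h2: "d^2 * a^2 / 2 \<le> (9/4 * a^2) / 2" by (rule divide_right_mono[OF h]) simp
    have f: "(9/4 * a^2) / 2 = 9/8 * (a^2::real)" by simp
    show ?thesis unfolding e using h2 f by metis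
  qed
  have sb2: "s \<le> 18" using sb a2 a4 by linarith
  have s2: "s^2 \<le> 81/16 * a^3"
  proof -
    have "s^2 \<le> (9/8 * a^2)^2" using sb s0 by (intro power_mono) auto
    also have "\<dots> = 81/64 * a^4" by (simp add: power2_eq_square power4_eq_xxxx)
    also have "\<dots> \<le> 81/64 * (4 * a^3)" using a4' by simp
    finally show ?thesis by simp
  qed
  have T1': "exp s * s^2 \<le> exp 18 * (81/16 * a^3)"
    using sb2 s2 by (intro mult_mono) auto
  have nE: "cmod E \<le> 9/4 * a^3"
  proof -
    have r1: "cmod E \<le> \<bar>Re E\<bar> + \<bar>Im E\<bar>" by (rule cmod_le)
    have r2: "\<bar>Re E\<bar> = w^2 * a^4 / 8" by (simp add: Eeq a_def abs_mult power_abs[symmetric])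
    have r3: "\<bar>Im E\<bar> = \<bar>d\<bar> * \<bar>w\<bar> * a^3 / 2" by (simp add: Eeq a_def abs_mult power_abs)
    have r4: "w^2 * a^4 / 8 \<le> 9/8 * a^3"
    proof -
      have "w^2 \<le> (3/2)^2" using hw by (metis abs_le_square_iff abs_of_nonneg zero_le_divide_iff zero_le_numeral)
      then have "w^2 * a^4 \<le> (3/2)^2 * (4 * a^3)" using a4' a0 by (intro mult_mono) auto
      then show ?thesis by (simp add: power_divide)
    qed
    have "\<bar>d\<bar> * \<bar>w\<bar> * a^3 \<le> 3/2 * (3/2) * a^3"
      using hd hw a0 by (intro mult_mono) auto
    then have r5: "\<bar>d\<bar> * \<bar>w\<bar> * a^3 / 2 \<le> 9/8 * a^3" by simp
    show ?thesis using r1 r2 r3 r4 r5 by linarith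
  qed
  have e18: "exp (18::real) \<ge> 1" by simp
  have "cmod X \<le> exp 18 * (81/16 * a^3) + (exp 18 * ((9/2 * a)^3) / 2 + exp 18 * ((9/2 * a)^3) / 2)/2 + 9/4 * a^3"
    by (rule lin5'[OF nX T1' T2' T2' nE])
  also have "\<dots> = (405/8 * exp 18 + 9/4) * a^3" by (simp add: power3_eq_cube field_simps)
  also have "\<dots> \<le> 100 * exp 18 * a^3"
  proof -
    have "405/8 * exp 18 + 9/4 \<le> 100 * exp (18::real)" using e18 by linarith
    then show ?thesis using a0 by (intro mult_right_mono) auto
  qed
  finally have cX: "cmod X \<le> 100 * exp 18 * a^3" .
  have "cmod (exp c * X) \<le> 1 * cmod X" unfolding norm_mult using ec by (intro mult_right_mono) auto
  then show ?thesis unfolding LHS using cX a_def by simp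
qed



lemma gauss_Gm: "gauss_approx p \<theta> = Gm (dist_mean p) (dist_var p) \<theta>"
  by (simp add: gauss_approx_def Gm_def)

lemma shift_Gm: "exp (\<i> * complex_of_real (of_int u * \<theta>)) * Gm m v \<theta> = Gm (m + of_int u) v \<theta>"
proof -
  have "\<i> * complex_of_real (of_int u * \<theta>) + (complex_of_real m * \<i> * complex_of_real \<theta> - complex_of_real (v * \<theta>^2 / 2))
     = complex_of_real (m + of_int u) * \<i> * complex_of_real \<theta> - complex_of_real (v * \<theta>^2 / 2)"
    by (simp add: algebra_simps)
  then show ?thesis unfolding Gm_def by (metis exp_add)
qed

lemma row_bound:
  fixes u w :: int
  assumes P: "P = (\<lambda>k. (a_dens s (k - u) + b_dens s (k - w))/2)"
    and uw: "\<bar>u - w\<bar> \<le> 2"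
    and f1: "f1 = exp (\<i> * complex_of_real (of_int u * \<theta>))"
    and f2: "f2 = exp (\<i> * complex_of_real (of_int w * \<theta>))"
    and th: "\<bar>\<theta>\<bar> \<le> pi"
  shows "cmod (gauss_approx P \<theta> - (f1 * alpha_star s \<theta> + f2 * beta_star s \<theta>)/2) \<le> 100 * exp 18 * \<bar>\<theta>\<bar>^3"
proof -
  obtain sa sb where A: "mom (a_dens s) (of_int (q s) / 2) sa" and B: "mom (b_dens s) (- of_int (q s) / 2) sb"
    using mom_all by blast
  define m1 where "m1 = of_int (q s) / 2 + (of_int u :: real)"
  define m2 where "m2 = - of_int (q s) / 2 + (of_int w :: real)"
  have mP: "dist_mean P = (m1 + m2)/2" unfolding P var_shiftmix(2)[OF A B] m1_def m2_def by (simp add: algebra_simps)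
  have vP: "dist_var P = (va s + vb s)/2 + (m1 - m2)^2/4" unfolding P var_shiftmix(1)[OF A B] m1_def m2_def va_def vb_def by simp
  have ga: "f1 * alpha_star s \<theta> = Gm m1 (va s) \<theta>"
    unfolding f1 alpha_star_def gauss_Gm mean_a shift_Gm m1_def va_def ..
  have gb: "f2 * beta_star s \<theta> = Gm m2 (vb s) \<theta>"
    unfolding f2 beta_star_def gauss_Gm mean_b shift_Gm m2_def vb_def ..
  have md: "\<bar>m1 - m2\<bar> \<le> 3"
  proof -
    have "m1 - m2 = of_int (q s) + of_int (u - w)" by (simp add: m1_def m2_def)
    moreover have "\<bar>of_int (u - w) :: real\<bar> \<le> 2" using uw by linarith
    moreover have "0 \<le> (of_int (q s) :: real)" "(of_int (q s) :: real) \<le> 1" using q_range[of s] by auto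
    ultimately show ?thesis by linarith
  qed
  have vd: "\<bar>va s - vb s\<bar> \<le> 3" using var_diff[of s] by simp
  have th4: "\<bar>\<theta>\<bar> \<le> 4" using th pi_less_4 by linarith
  show ?thesis unfolding gauss_Gm mP vP ga gb
    by (rule gauss_key[OF va_nonneg vb_nonneg md vd th4])
qed

lemma max_norm_le: "v \<noteq> [] \<Longrightarrow> (\<And>x. x \<in> set v \<Longrightarrow> cmod x \<le> B) \<Longrightarrow> max_norm v \<le> B"
  unfolding max_norm_def by (subst Max_le_iff) auto

lemma f_one: "(1::complex) = exp (\<i> * complex_of_real (of_int 0 * \<theta>))" by simp
lemma f_ee: "ee \<theta> = exp (\<i> * complex_of_real (of_int 1 * \<theta>))" by (simp add: ee_def)
lemma f_inv: "inverse (ee \<theta>) = exp (\<i> * complex_of_real (of_int (-1) * \<theta>))"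
  by (simp add: ee_def exp_minus[symmetric])

lemma sum6: "(\<Sum>j<(6::nat). f j) = f 0 + f 1 + f 2 + f 3 + f 4 + (f 5 :: complex)"
  by (simp add: numeral_eq_Suc sum.lessThan_Suc)

lemma X_even: "X_vec (2*n) \<theta> = vec_sub (S_star (2*n) \<theta>) (mat_vec (D0 \<theta>) (S_star n \<theta>))"
  by (simp add: X_vec_def)
lemma X_odd: "X_vec (2*n+1) \<theta> = vec_sub (S_star (2*n+1) \<theta>) (mat_vec (D1 \<theta>) (S_star n \<theta>))"
  by (simp add: X_vec_def)

lemma XE0: "X_vec (2*n) \<theta> =
   [alpha_star (2*(2*n)) \<theta> - (1 * alpha_star (2*n) \<theta> + 1 * beta_star (2*n) \<theta>)/2,
    beta_star (2*(2*n)) \<theta> - (1 * alpha_star (2*n) \<theta> + 1 * beta_star (2*n) \<theta>)/2,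
    alpha_star (2*(2*n)+1) \<theta> - (1 * alpha_star (2*n) \<theta> + ee \<theta> * beta_star (2*n) \<theta>)/2,
    beta_star (2*(2*n)+1) \<theta> - (1 * alpha_star (2*n+1) \<theta> + inverse (ee \<theta>) * beta_star (2*n+1) \<theta>)/2,
    alpha_star (2*(2*n)+2) \<theta> - (1 * alpha_star (2*n+1) \<theta> + 1 * beta_star (2*n+1) \<theta>)/2,
    beta_star (2*(2*n)+2) \<theta> - (ee \<theta> * alpha_star (2*n+1) \<theta> + inverse (ee \<theta>) * beta_star (2*n+1) \<theta>)/2]"
  unfolding X_even vec_sub_def mat_vec_def sum6 D0_def S_star_def Let_def by (simp add: field_simps)

lemma XE1: "X_vec (2*n+1) \<theta> =
   [alpha_star (2*(2*n+1)) \<theta> - (1 * alpha_star (2*n+1) \<theta> + 1 * beta_star (2*n+1) \<theta>)/2,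
    beta_star (2*(2*n+1)) \<theta> - (ee \<theta> * alpha_star (2*n+1) \<theta> + inverse (ee \<theta>) * beta_star (2*n+1) \<theta>)/2,
    alpha_star (2*(2*n+1)+1) \<theta> - (ee \<theta> * alpha_star (2*n+1) \<theta> + 1 * beta_star (2*n+1) \<theta>)/2,
    beta_star (2*(2*n+1)+1) \<theta> - (1 * alpha_star (2*n+2) \<theta> + inverse (ee \<theta>) * beta_star (2*n+2) \<theta>)/2,
    alpha_star (2*(2*n+1)+2) \<theta> - (1 * alpha_star (2*n+2) \<theta> + 1 * beta_star (2*n+2) \<theta>)/2,
    beta_star (2*(2*n+1)+2) \<theta> - (1 * alpha_star (2*n+2) \<theta> + 1 * beta_star (2*n+2) \<theta>)/2]"
  unfolding X_odd vec_sub_def mat_vec_def sum6 D1_def S_star_def Let_def by (simp add: field_simps)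



lemma rowA:
  fixes u w :: int
  assumes "a_dens r = (\<lambda>k. (a_dens s (k - u) + b_dens s (k - w))/2)"
    and "\<bar>u - w\<bar> \<le> 2"
    and "f1 = exp (\<i> * complex_of_real (of_int u * \<theta>))"
    and "f2 = exp (\<i> * complex_of_real (of_int w * \<theta>))"
    and "\<bar>\<theta>\<bar> \<le> pi"
  shows "cmod (alpha_star r \<theta> - (f1 * alpha_star s \<theta> + f2 * beta_star s \<theta>)/2) \<le> 100 * exp 18 * \<bar>\<theta>\<bar>^3"
proof -
  have e: "alpha_star r \<theta> = gauss_approx (a_dens r) \<theta>" by (simp add: alpha_star_def)
  show ?thesis unfolding e by (rule row_bound[OF assms])
qed

lemma rowB:
  fixes u w :: int
  assumes "b_dens r = (\<lambda>k. (a_dens s (k - u) + b_dens s (k - w))/2)"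
    and "\<bar>u - w\<bar> \<le> 2"
    and "f1 = exp (\<i> * complex_of_real (of_int u * \<theta>))"
    and "f2 = exp (\<i> * complex_of_real (of_int w * \<theta>))"
    and "\<bar>\<theta>\<bar> \<le> pi"
  shows "cmod (beta_star r \<theta> - (f1 * alpha_star s \<theta> + f2 * beta_star s \<theta>)/2) \<le> 100 * exp 18 * \<bar>\<theta>\<bar>^3"
proof -
  have e: "beta_star r \<theta> = gauss_approx (b_dens r) \<theta>" by (simp add: beta_star_def)
  show ?thesis unfolding e by (rule row_bound[OF assms])
qed

lemma f_q0: "even m \<Longrightarrow> (1::complex) = exp (\<i> * complex_of_real (of_int (q m) * \<theta>))" by (simp add: q_def)
lemma f_q1: "odd m \<Longrightarrow> ee \<theta> = exp (\<i> * complex_of_real (of_int (q m) * \<theta>))" by (simp add: q_def ee_def)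
lemma f_qm: "even m \<Longrightarrow> inverse (ee \<theta>) = exp (\<i> * complex_of_real (of_int (q m - 1) * \<theta>))"
  by (simp add: q_def ee_def exp_minus[symmetric])
lemma f_q0m: "odd m \<Longrightarrow> (1::complex) = exp (\<i> * complex_of_real (of_int (q m - 1) * \<theta>))" by (simp add: q_def)

lemma qd: "\<bar>q m - q m'\<bar> \<le> 2" "\<bar>q m - (q m' - 1)\<bar> \<le> 2" "\<bar>(0::int) - 0\<bar> \<le> 2" "\<bar>(0::int) - (-1)\<bar> \<le> 2"
  by (simp_all add: q_def)

theorem lemma3p7:
  shows "\<exists>C::real. \<forall>(t::nat) (\<theta>::real). \<bar>\<theta>\<bar> \<le> pi \<longrightarrow>
           max_norm (X_vec t \<theta>) \<le> C * \<bar>\<theta>\<bar> ^ 3"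
proof (intro exI allI impI)
  fix t :: nat and \<theta> :: real
  assume th: "\<bar>\<theta>\<bar> \<le> pi"
  show "max_norm (X_vec t \<theta>) \<le> 100 * exp 18 * \<bar>\<theta>\<bar> ^ 3"
  proof (cases "even t")
    case True
    then obtain n where t: "t = 2*n" by blast
    have e: "2*(2*n)+2 = 2*(2*n+1)" by simp
    have ev: "even (2*n)" "odd (2*n+1)" "even (2*n+1+1)" by simp_all
    note r1 = rowA[OF RA_e[of "2*n"] qd(3) f_one f_one th]
    note r2 = rowB[OF RB_e[of "2*n"] qd(2) f_q0[OF ev(1)] f_q0m[OF ev(2)] th]
    note r3 = rowA[OF RA_o[of "2*n"] qd(1) f_q0[OF ev(1)] f_q1[OF ev(2)] th]
    note r4 = rowB[OF RB_o[of "2*n"] qd(4) f_one f_inv th]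
    note r5 = rowA[OF RA_e[of "2*n+1", folded e] qd(3) f_one f_one th]
    note r6 = rowB[OF RB_e[of "2*n+1", folded e] qd(2) f_q1[OF ev(2)] f_qm[OF ev(3)] th]
    show ?thesis unfolding t XE0
      by (rule max_norm_le) (use r1 r2 r3 r4 r5 r6 in auto)
  next
    case False
    then obtain n where t: "t = 2*n+1" using oddE by blast
    have e2: "2*n+2 = 2*n+1+(1::nat)" by simp
    have e3: "2*(2*n+1)+2 = 2*(2*n+2)" by simp
    have ev: "odd (2*n+1)" "even (2*n+1+1)" "even (2*n+2)" "odd (2*n+2+1)" by simp_all
    note r1 = rowA[OF RA_e[of "2*n+1"] qd(3) f_one f_one th]
    note r2 = rowB[OF RB_e[of "2*n+1"] qd(2) f_q1[OF ev(1)] f_qm[OF ev(2)] th]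
    note r3 = rowA[OF RA_o[of "2*n+1"] qd(1) f_q1[OF ev(1)] f_q0[OF ev(2)] th]
    note r4 = rowB[OF RB_o[of "2*n+1", folded e2] qd(4) f_one f_inv th]
    note r5 = rowA[OF RA_e[of "2*n+2", folded e3] qd(3) f_one f_one th]
    note r6 = rowB[OF RB_e[of "2*n+2", folded e3] qd(2) f_q0[OF ev(3)] f_q0m[OF ev(4)] th]
    show ?thesis unfolding t XE1
      by (rule max_norm_le) (use r1 r2 r3 r4 r5 r6 in auto)
  qed
qed


end
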